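(* Suppose Assumptions (A1), (A2), (A3) hold and $\delta\in(0,a_0)$, where $a_0=\frac{1-e^{-\omega}}{2\sigma}$. Then there exists a unique $\mu_\infty\in\mathcal{P}_1(\mathbb{R}^d)$ with $\Psi(\mu_\infty)=\mu_\infty$. Moreover, for every $\gamma\in\mathcal{P}_1(\mathbb{R}^d)$, $$\limsup_{n\to\infty}\frac1n\log\mathcal{W}_1(\Psi^n(\gamma),\mu_\infty)<0 .$$
   Context: Fix integers $d,m\ge1$, a real $d\times d$ matrix $A$ with operator norm $\|A\|=\sup_{x\neq0}|Ax|/|x|$, $\delta>0$, a Borel probability measure $\theta$ on $\mathbb{R}^m$ and a measurable $f:\mathbb{R}^d\times\mathcal{P}_1(\mathbb{R}^d)\times\mathbb{R}^m\to\mathbb{R}^d$. $\mathcal{P}_1(\mathbb{R}^d)$ is the set of Borel probability measures on $\mathbb{R}^d$ with finite first moment, with the Wasserstein-1 distance $\mathcal{W}_1(\mu,\nu)=\inf E|X-Y|$ over couplings. For $\mu\in\mathcal{P}_1(\mathbb{R}^d)$, $\Psi(\mu)$ is the law of $AX+\delta f(X,\mu,\epsilon)$ where $(X,\epsilon)$ has law $\mu\otimes\theta$ (under (A1),(A2), $\Psi$ maps $\mathcal{P}_1(\mathbb{R}^d)$ into itself); $\Psi^n$ is the $n$-fold composition. Assumption (A1): $\sigma:=\int D(z)\theta(dz)<\infty$, where $D(z):=\sup\frac{|f(x_1,\mu_1,z)-f(x_2,\mu_2,z)|}{|x_1-x_2|+\mathcal{W}_1(\mu_1,\mu_2)}$,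 supremum over $(x_1,\mu_1)\neq(x_2,\mu_2)$. Assumption (A2): $\int D_1(z)\theta(dz)<\infty$, where $D_1(z)=|f(0,\delta_0,z)|$. Assumption (A3): $\|A\|\le e^{-\omega}$ for some $\omega>0$. *)

theory Defs
  imports "HOL-Probability.Probability"
begin

definition P1 :: "'a::euclidean_space measure set" where
  "P1 = {\<mu>. prob_space \<mu> \<and> sets \<mu> = sets borel \<and> (\<integral>\<^sup>+ x. ennreal (norm x) \<partial>\<mu>) < \<infinity>}"

definition couplings :: "'a::euclidean_space measure \<Rightarrow> 'a measure \<Rightarrow> ('a \<times> 'a) measure set" where
  "couplings \<mu> \<nu> = {\<pi>. prob_space \<pi> \<and> sets \<pi> = sets (borel \<Otimes>\<^sub>M borel)
      \<and> distr \<pi> borel fst = \<mu> \<and> distr \<pi> borel snd = \<nu>}"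

text \<open>Wasserstein-1 distance (finite on P1; real-valued).\<close>
definition W1 :: "'a::euclidean_space measure \<Rightarrow> 'a measure \<Rightarrow> real" where
  "W1 \<mu> \<nu> = enn2real (INF \<pi>\<in>couplings \<mu> \<nu>. \<integral>\<^sup>+ p. ennreal (dist (fst p) (snd p)) \<partial>\<pi>)"

definition Dlip :: "('a::euclidean_space \<Rightarrow> 'a measure \<Rightarrow> 'c \<Rightarrow> 'a) \<Rightarrow> 'c \<Rightarrow> ennreal" where
  "Dlip f z = (SUP p \<in> {((x1, \<mu>1), (x2, \<mu>2)). \<mu>1 \<in> P1 \<and> \<mu>2 \<in> P1 \<and> (x1, \<mu>1) \<noteq> (x2, \<mu>2)}.
      (case p of ((x1, \<mu>1), (x2, \<mu>2)) \<Rightarrow>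
        ennreal (dist (f x1 \<mu>1 z) (f x2 \<mu>2 z) / (dist x1 x2 + W1 \<mu>1 \<mu>2))))"

definition Psi :: "real^'d^'d \<Rightarrow> real \<Rightarrow> (real^'d \<Rightarrow> (real^'d) measure \<Rightarrow> 'c \<Rightarrow> real^'d)
     \<Rightarrow> 'c measure \<Rightarrow> (real^'d) measure \<Rightarrow> (real^'d) measure" where
  "Psi A \<delta> f \<theta> \<mu> = distr (\<mu> \<Otimes>\<^sub>M \<theta>) borel (\<lambda>(x, z). A *v x + \<delta> *\<^sub>R f x \<mu> z)"

definition log_rate :: "real \<Rightarrow> nat \<Rightarrow> ereal" where
  "log_rate w n = (if w = 0 then -\<infinity> else ereal (ln w / real n))"

end

theory Submission imports Defs begin

lemma ennreal_enn2real_le: "ennreal (enn2real x) \<le> x"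
  by (cases x) auto

lemma P1D: assumes "\<mu> \<in> P1" shows "prob_space \<mu>" "sets \<mu> = sets borel"
   "(\<integral>\<^sup>+ x. ennreal (norm x) \<partial>\<mu>) < \<infinity>"
  using assms by (auto simp: P1_def)

lemma space_P1: "\<mu> \<in> P1 \<Longrightarrow> space \<mu> = UNIV"
  using sets_eq_imp_space_eq[of \<mu> borel] by (auto simp: P1_def)

lemma distr_coupling_in:
  fixes X Y :: "'b \<Rightarrow> 'a::euclidean_space"
  assumes "prob_space M" and [measurable]: "X \<in> borel_measurable M" "Y \<in> borel_measurable M"
  shows "distr M (borel \<Otimes>\<^sub>M borel) (\<lambda>\<omega>. (X \<omega>, Y \<omega>)) \<in> couplings (distr M borel X) (distr M borel Y)"
  unfolding couplings_def
  by (auto intro!: prob_space.prob_space_distr assms simp: distr_distr comp_def)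

lemma coupling_INF_le:
  fixes X Y :: "'b \<Rightarrow> 'a::euclidean_space"
  assumes "prob_space M" and [measurable]: "X \<in> borel_measurable M" "Y \<in> borel_measurable M"
  shows "(INF \<pi>\<in>couplings (distr M borel X) (distr M borel Y). \<integral>\<^sup>+ p. ennreal (dist (fst p) (snd p)) \<partial>\<pi>)
     \<le> (\<integral>\<^sup>+\<omega>. ennreal (dist (X \<omega>) (Y \<omega>)) \<partial>M)"
proof -
  have "(INF \<pi>\<in>couplings (distr M borel X) (distr M borel Y). \<integral>\<^sup>+ p. ennreal (dist (fst p) (snd p)) \<partial>\<pi>)
     \<le> (\<integral>\<^sup>+ p. ennreal (dist (fst p) (snd p)) \<partial>distr M (borel \<Otimes>\<^sub>M borel) (\<lambda>\<omega>. (X \<omega>, Y \<omega>)))"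
    by (rule INF_lower[OF distr_coupling_in[OF assms]])
  also have "\<dots> = (\<integral>\<^sup>+\<omega>. ennreal (dist (X \<omega>) (Y \<omega>)) \<partial>M)"
    by (subst nn_integral_distr) auto
  finally show ?thesis .
qed

lemma coupling_W1_le:
  fixes X Y :: "'b \<Rightarrow> 'a::euclidean_space"
  assumes "prob_space M" and [measurable]: "X \<in> borel_measurable M" "Y \<in> borel_measurable M"
  shows "ennreal (W1 (distr M borel X) (distr M borel Y)) \<le> (\<integral>\<^sup>+\<omega>. ennreal (dist (X \<omega>) (Y \<omega>)) \<partial>M)"
  unfolding W1_def using ennreal_enn2real_le coupling_INF_le[OF assms] order_trans by blast

lemma distr_pair_snd':
  assumes "prob_space M" "prob_space N"
  shows "distr (M \<Otimes>\<^sub>M N) N snd = N"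
proof (intro measure_eqI)
  interpret M: prob_space M by fact
  interpret N: prob_space N by fact
  interpret P: pair_sigma_finite M N ..
  fix A assume A: "A \<in> sets (distr (M \<Otimes>\<^sub>M N) N snd)"
  from A have "emeasure (distr (M \<Otimes>\<^sub>M N) N snd) A = emeasure (M \<Otimes>\<^sub>M N) (space M \<times> A)"
    by (auto simp add: emeasure_distr space_pair_measure dest: sets.sets_into_space intro!: arg_cong2[where f=emeasure])
  with A show "emeasure (distr (M \<Otimes>\<^sub>M N) N snd) A = emeasure N A"
  proof -
    have "emeasure (M \<Otimes>\<^sub>M N) (space M \<times> A) = emeasure M (space M) * emeasure N A"
      using A by (intro N.emeasure_pair_measure_Times) auto
    then show ?thesis using A \<open>emeasure (distr (M \<Otimes>\<^sub>M N) N snd) A = _\<close> by (simp add: M.emeasure_space_1)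
  qed
qed simp

lemma P1_distr_fst: assumes "\<mu> \<in> P1" "\<nu> \<in> P1"
  shows "distr (\<mu> \<Otimes>\<^sub>M \<nu>) borel fst = \<mu>"
proof -
  interpret N: prob_space \<nu> using assms P1D by auto
  have "distr (\<mu> \<Otimes>\<^sub>M \<nu>) borel fst = distr (\<mu> \<Otimes>\<^sub>M \<nu>) \<mu> fst"
    using assms by (intro distr_cong) (auto simp: P1_def)
  also have "\<dots> = \<mu>" by (rule N.distr_pair_fst)
  finally show ?thesis .
qed

lemma P1_distr_snd: assumes "\<mu> \<in> P1" "\<nu> \<in> P1"
  shows "distr (\<mu> \<Otimes>\<^sub>M \<nu>) borel snd = \<nu>"
proof -
  have "distr (\<mu> \<Otimes>\<^sub>M \<nu>) borel snd = distr (\<mu> \<Otimes>\<^sub>M \<nu>) \<nu> snd"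
    using assms by (intro distr_cong) (auto simp: P1_def)
  also have "\<dots> = \<nu>" by (rule distr_pair_snd') (use assms P1D in auto)
  finally show ?thesis .
qed

lemma W1_INF_finite:
  fixes \<mu> \<nu> :: "'a::euclidean_space measure"
  assumes "\<mu> \<in> P1" "\<nu> \<in> P1"
  shows "(INF \<pi>\<in>couplings \<mu> \<nu>. \<integral>\<^sup>+ p. ennreal (dist (fst p) (snd p)) \<partial>\<pi>) < \<infinity>"
proof -
  interpret M: prob_space \<mu> using assms P1D by auto
  interpret N: prob_space \<nu> using assms P1D by auto
  interpret P: pair_prob_space \<mu> \<nu> ..
  have sm[measurable_cong]: "sets \<mu> = sets borel" "sets \<nu> = sets borel" using assms P1D by auto
  have "(INF \<pi>\<in>couplings \<mu> \<nu>. \<integral>\<^sup>+ p. ennreal (dist (fst p) (snd p)) \<partial>\<pi>)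
     \<le> (\<integral>\<^sup>+\<omega>. ennreal (dist (fst \<omega>) (snd \<omega>)) \<partial>(\<mu> \<Otimes>\<^sub>M \<nu>))"
    using coupling_INF_le[of "\<mu> \<Otimes>\<^sub>M \<nu>" fst snd] P1_distr_fst[OF assms] P1_distr_snd[OF assms]
    by (simp add: P.prob_space_axioms)
  also have "\<dots> \<le> (\<integral>\<^sup>+\<omega>. ennreal (norm (fst \<omega>)) + ennreal (norm (snd \<omega>)) \<partial>(\<mu> \<Otimes>\<^sub>M \<nu>))"
    by (intro nn_integral_mono) (auto simp: dist_norm norm_triangle_ineq4 simp flip: ennreal_plus)
  also have "\<dots> = (\<integral>\<^sup>+\<omega>. ennreal (norm (fst \<omega>)) \<partial>(\<mu> \<Otimes>\<^sub>M \<nu>)) + (\<integral>\<^sup>+\<omega>. ennreal (norm (snd \<omega>)) \<partial>(\<mu> \<Otimes>\<^sub>M \<nu>))"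
    by (rule nn_integral_add) auto
  also have "(\<integral>\<^sup>+\<omega>. ennreal (norm (fst \<omega>)) \<partial>(\<mu> \<Otimes>\<^sub>M \<nu>)) = (\<integral>\<^sup>+x. ennreal (norm x) \<partial>\<mu>)"
    by (subst P1_distr_fst[OF assms, symmetric]) (simp add: nn_integral_distr)
  also have "(\<integral>\<^sup>+\<omega>. ennreal (norm (snd \<omega>)) \<partial>(\<mu> \<Otimes>\<^sub>M \<nu>)) = (\<integral>\<^sup>+x. ennreal (norm x) \<partial>\<nu>)"
    by (subst (2) P1_distr_snd[OF assms, symmetric]) (simp add: nn_integral_distr)
  also have "(\<integral>\<^sup>+x. ennreal (norm x) \<partial>\<mu>) + (\<integral>\<^sup>+x. ennreal (norm x) \<partial>\<nu>) < \<infinity>"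
    using assms P1D by auto
  finally show ?thesis .
qed

lemma coupling_lip_le:
  fixes \<mu> \<nu> :: "'a::euclidean_space measure" and g :: "'a \<Rightarrow> real"
  assumes \<pi>: "\<pi> \<in> couplings \<mu> \<nu>" and g[measurable]: "g \<in> borel_measurable borel"
    and lip: "\<And>x y. g x \<le> g y + k * dist x y" and k: "k \<ge> 0" and g0: "\<And>x. g x \<ge> 0"
  shows "(\<integral>\<^sup>+x. ennreal (g x) \<partial>\<mu>) \<le> (\<integral>\<^sup>+x. ennreal (g x) \<partial>\<nu>) + ennreal k * (\<integral>\<^sup>+ p. ennreal (dist (fst p) (snd p)) \<partial>\<pi>)"
proof -
  have sp[measurable_cong]: "sets \<pi> = sets (borel \<Otimes>\<^sub>M borel)" and m1: "distr \<pi> borel fst = \<mu>" and m2: "distr \<pi> borel snd = \<nu>"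
    using \<pi> by (auto simp: couplings_def)
  have "(\<integral>\<^sup>+x. ennreal (g x) \<partial>\<mu>) = (\<integral>\<^sup>+p. ennreal (g (fst p)) \<partial>\<pi>)"
    by (subst m1[symmetric]) (simp add: nn_integral_distr)
  also have "\<dots> \<le> (\<integral>\<^sup>+p. ennreal (g (snd p)) + ennreal k * ennreal (dist (fst p) (snd p)) \<partial>\<pi>)"
    using lip k g0 by (intro nn_integral_mono) (auto simp flip: ennreal_plus ennreal_mult intro!: ennreal_leI)
  also have "\<dots> = (\<integral>\<^sup>+p. ennreal (g (snd p)) \<partial>\<pi>) + ennreal k * (\<integral>\<^sup>+ p. ennreal (dist (fst p) (snd p)) \<partial>\<pi>)"
    by (simp add: nn_integral_add nn_integral_cmult)
  also have "(\<integral>\<^sup>+p. ennreal (g (snd p)) \<partial>\<pi>) = (\<integral>\<^sup>+x. ennreal (g x) \<partial>\<nu>)"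
    by (subst m2[symmetric]) (simp add: nn_integral_distr)
  finally show ?thesis .
qed

lemma INF_zero_lip_le:
  fixes \<mu> \<nu> :: "'a::euclidean_space measure" and g :: "'a \<Rightarrow> real"
  assumes I: "(INF \<pi>\<in>couplings \<mu> \<nu>. \<integral>\<^sup>+ p. ennreal (dist (fst p) (snd p)) \<partial>\<pi>) = 0"
    and g[measurable]: "g \<in> borel_measurable borel"
    and lip: "\<And>x y. g x \<le> g y + k * dist x y" and k: "k \<ge> 0" and g0: "\<And>x. g x \<ge> 0"
  shows "(\<integral>\<^sup>+x. ennreal (g x) \<partial>\<mu>) \<le> (\<integral>\<^sup>+x. ennreal (g x) \<partial>\<nu>)"
proof (rule ennreal_le_epsilon)
  fix e :: real assume e: "0 < e"
  then have "(INF \<pi>\<in>couplings \<mu> \<nu>. \<integral>\<^sup>+ p. ennreal (dist (fst p) (snd p)) \<partial>\<pi>) < ennreal (e / (k+1))"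
    using I k by simp
  then obtain \<pi> where \<pi>: "\<pi> \<in> couplings \<mu> \<nu>" and c: "(\<integral>\<^sup>+ p. ennreal (dist (fst p) (snd p)) \<partial>\<pi>) < ennreal (e / (k+1))"
    by (auto simp: INF_less_iff)
  have "ennreal k * (\<integral>\<^sup>+ p. ennreal (dist (fst p) (snd p)) \<partial>\<pi>) \<le> ennreal k * ennreal (e / (k+1))"
    using c by (intro mult_left_mono) auto
  also have "\<dots> = ennreal (k * (e / (k+1)))" by (rule ennreal_mult[symmetric]) (use k e in auto)
  also have "\<dots> \<le> ennreal e"
  proof (intro ennreal_leI)
    have "k * (e / (k+1)) \<le> (k+1) * (e / (k+1))" using k e by (intro mult_right_mono) auto
    then show "k * (e / (k+1)) \<le> e" using k by simp
  qed
  finally have "ennreal k * (\<integral>\<^sup>+ p. ennreal (dist (fst p) (snd p)) \<partial>\<pi>) \<le> ennreal e" .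
  with coupling_lip_le[OF \<pi> g lip k g0]
  show "(\<integral>\<^sup>+x. ennreal (g x) \<partial>\<mu>) \<le> (\<integral>\<^sup>+x. ennreal (g x) \<partial>\<nu>) + ennreal e"
    by (meson add_left_mono order_trans)
qed

lemma SUP_approx_open:
  fixes U :: "'a::euclidean_space set"
  assumes "open U" "U \<noteq> UNIV"
  shows "(SUP n. ennreal (min 1 (real n * infdist x (- U)))) = indicator U x"
proof (cases "x \<in> U")
  case True
  have cl: "closed (- U)" "- U \<noteq> {}" using assms by auto
  have pos: "infdist x (- U) > 0"
    using in_closed_iff_infdist_zero[OF cl, of x] True infdist_nonneg[of x "- U"] by auto
  obtain n :: nat where n: "1 / infdist x (- U) < n" using reals_Archimedean2 by blast
  have "1 \<le> real n * infdist x (- U)" using n pos by (simp add: field_simps)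
  then have "ennreal (min 1 (real n * infdist x (- U))) = 1" by simp
  then have "1 \<le> (SUP n. ennreal (min 1 (real n * infdist x (- U))))"
    by (metis (mono_tags) UNIV_I SUP_upper order_refl)
  moreover have "(SUP n. ennreal (min 1 (real n * infdist x (- U)))) \<le> 1"
    by (intro SUP_least) auto
  ultimately have "(SUP n. ennreal (min 1 (real n * infdist x (- U)))) = 1" by (rule antisym[rotated])
  then show ?thesis using True by simp
next
  case False
  then have "infdist x (- U) = 0" by (simp add: infdist_zero)
  then show ?thesis using False by simp
qed

lemma incseq_approx_open:
  "incseq (\<lambda>n x. ennreal (min 1 (real n * infdist x (U::'a::euclidean_space set))))"
  by (auto simp: incseq_def le_fun_def intro!: ennreal_leI min.mono mult_right_mono infdist_nonneg)

lemma approx_open_lip: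
  "min 1 (real n * infdist x U) \<le> min 1 (real n * infdist y U) + real n * dist x y"
proof -
  have "infdist x U \<le> infdist y U + dist x y" by (rule infdist_triangle)
  then have "real n * infdist x U \<le> real n * infdist y U + real n * dist x y"
    by (metis distrib_left mult_left_mono of_nat_0_le_iff)
  moreover have "0 \<le> real n * dist x y" by simp
  ultimately show ?thesis unfolding min_def by (smt (verit))
qed

lemma W1_zero_imp_eq:
  fixes \<mu> \<nu> :: "'a::euclidean_space measure"
  assumes P: "\<mu> \<in> P1" "\<nu> \<in> P1" and W: "W1 \<mu> \<nu> = 0"
  shows "\<mu> = \<nu>"
proof -
  have I: "(INF \<pi>\<in>couplings \<mu> \<nu>. \<integral>\<^sup>+ p. ennreal (dist (fst p) (snd p)) \<partial>\<pi>) = 0"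
    using W W1_INF_finite[OF P] unfolding W1_def by (auto simp: enn2real_eq_0_iff)
  have I': "(INF \<pi>\<in>couplings \<mu> \<nu>. \<integral>\<^sup>+ p. ennreal (dist (snd p) (fst p)) \<partial>\<pi>) = 0"
    using I by (simp add: dist_commute)
  have sm: "sets \<mu> = sets borel" "sets \<nu> = sets borel" using P P1D by auto
  have eqU: "emeasure \<mu> U = emeasure \<nu> U" if U: "open U" for U
  proof (cases "U = UNIV")
    case True
    then show ?thesis using P P1D(1) prob_space.emeasure_space_1 space_P1 by metis
  next
    case False
    define h where "h n x = ennreal (min 1 (real n * infdist x (- U)))" for n x
    have hm[measurable]: "(\<lambda>x. min 1 (real n * infdist x (- U))) \<in> borel_measurable borel" for n
      by (intro borel_measurable_continuous_onI continuous_intros)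
    have eqn: "(\<integral>\<^sup>+x. h n x \<partial>\<mu>) = (\<integral>\<^sup>+x. h n x \<partial>\<nu>)" for n
    proof (rule antisym)
      show "(\<integral>\<^sup>+x. h n x \<partial>\<mu>) \<le> (\<integral>\<^sup>+x. h n x \<partial>\<nu>)" unfolding h_def
        by (rule INF_zero_lip_le[OF I hm approx_open_lip]) (auto intro!: infdist_nonneg mult_nonneg_nonneg)
      have "(\<integral>\<^sup>+x. h n x \<partial>\<nu>) \<le> (\<integral>\<^sup>+x. h n x \<partial>\<mu>)" unfolding h_def
      proof (rule INF_zero_lip_le[of \<nu> \<mu>, OF _ hm approx_open_lip])
        show "(INF \<pi>\<in>couplings \<nu> \<mu>. \<integral>\<^sup>+ p. ennreal (dist (fst p) (snd p)) \<partial>\<pi>) = 0"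
        proof -
          have "(INF \<pi>\<in>couplings \<nu> \<mu>. \<integral>\<^sup>+ p. ennreal (dist (fst p) (snd p)) \<partial>\<pi>) \<le>
                (INF \<pi>\<in>couplings \<mu> \<nu>. \<integral>\<^sup>+ p. ennreal (dist (snd p) (fst p)) \<partial>\<pi>)"
          proof (rule INF_greatest)
            fix \<pi> assume \<pi>: "\<pi> \<in> couplings \<mu> \<nu>"
            have sp[measurable_cong]: "sets \<pi> = sets (borel \<Otimes>\<^sub>M borel)" using \<pi> by (auto simp: couplings_def)
            let ?s = "distr \<pi> (borel \<Otimes>\<^sub>M borel) (\<lambda>p. (snd p, fst p))"
            have "?s \<in> couplings \<nu> \<mu>"
              using \<pi> by (auto simp: couplings_def distr_distr comp_def intro!: prob_space.prob_space_distr)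
            moreover have "(\<integral>\<^sup>+ p. ennreal (dist (fst p) (snd p)) \<partial>?s) = (\<integral>\<^sup>+ p. ennreal (dist (snd p) (fst p)) \<partial>\<pi>)"
              by (simp add: nn_integral_distr)
            ultimately show "(INF \<pi>\<in>couplings \<nu> \<mu>. \<integral>\<^sup>+ p. ennreal (dist (fst p) (snd p)) \<partial>\<pi>) \<le> (\<integral>\<^sup>+ p. ennreal (dist (snd p) (fst p)) \<partial>\<pi>)"
              using INF_lower[of ?s "couplings \<nu> \<mu>" "\<lambda>\<pi>. \<integral>\<^sup>+ p. ennreal (dist (fst p) (snd p)) \<partial>\<pi>"] by simp
          qed
          then show ?thesis using I' by simp
        qed
      qed (auto intro!: infdist_nonneg mult_nonneg_nonneg)
      then show "(\<integral>\<^sup>+x. h n x \<partial>\<nu>) \<le> (\<integral>\<^sup>+x. h n x \<partial>\<mu>)" .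
    qed
    have lim: "(\<integral>\<^sup>+x. indicator U x \<partial>M) = (SUP n. \<integral>\<^sup>+x. h n x \<partial>M)" if "sets M = sets borel" for M :: "'a measure"
    proof -
      have [measurable_cong]: "sets M = sets borel" by fact
      have "(\<integral>\<^sup>+x. indicator U x \<partial>M) = (\<integral>\<^sup>+x. (SUP n. h n x) \<partial>M)"
        unfolding h_def using SUP_approx_open[OF U False] by simp
      also have "\<dots> = (SUP n. \<integral>\<^sup>+x. h n x \<partial>M)"
        unfolding h_def by (rule nn_integral_monotone_convergence_SUP[OF incseq_approx_open]) simp
      finally show ?thesis .
    qed
    have Ub: "U \<in> sets borel" using U by auto
    have "emeasure \<mu> U = (\<integral>\<^sup>+x. indicator U x \<partial>\<mu>)"
      using Ub sm by (simp add: nn_integral_indicator)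
    also have "\<dots> = (SUP n. \<integral>\<^sup>+x. h n x \<partial>\<mu>)" by (rule lim[OF sm(1)])
    also have "\<dots> = (SUP n. \<integral>\<^sup>+x. h n x \<partial>\<nu>)" using eqn by simp
    also have "\<dots> = (\<integral>\<^sup>+x. indicator U x \<partial>\<nu>)" by (rule lim[OF sm(2), symmetric])
    also have "\<dots> = emeasure \<nu> U"
      using Ub sm by (simp add: nn_integral_indicator)
    finally show ?thesis .
  qed
  show ?thesis
  proof (rule measure_eqI_generator_eq[where E="Collect open" and \<Omega>=UNIV and A="\<lambda>_. UNIV"])
    show "Int_stable (Collect open)" by (auto simp: Int_stable_def)
    show "sets \<mu> = sigma_sets UNIV (Collect open)" "sets \<nu> = sigma_sets UNIV (Collect open)"
      using sm by (simp_all add: borel_def sets_measure_of)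
    show "emeasure \<mu> UNIV \<noteq> \<infinity>" for i
    proof -
      interpret prob_space \<mu> using P P1D by auto
      show ?thesis using emeasure_space_1 space_P1[OF P(1)] by simp
    qed
  qed (use eqU in auto)
qed



lemma f_lip:
  fixes f :: "'a::euclidean_space \<Rightarrow> 'a measure \<Rightarrow> 'c \<Rightarrow> 'a"
  assumes "\<mu> \<in> P1" "\<nu> \<in> P1"
  shows "ennreal (dist (f x \<mu> z) (f y \<nu> z)) \<le> Dlip f z * ennreal (dist x y + W1 \<mu> \<nu>)"
proof (cases "(x, \<mu>) = (y, \<nu>)")
  case True then show ?thesis by simp
next
  case False
  have W0: "W1 \<mu> \<nu> \<ge> 0" by (simp add: W1_def)
  have pos: "dist x y + W1 \<mu> \<nu> > 0"
  proof (rule ccontr)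
    assume "\<not> ?thesis"
    then have "dist x y = 0" "W1 \<mu> \<nu> = 0" using W0 zero_le_dist[of x y] by linarith+
    then have "x = y" "\<mu> = \<nu>" using W1_zero_imp_eq[OF assms] by auto
    with False show False by simp
  qed
  have "ennreal (dist (f x \<mu> z) (f y \<nu> z) / (dist x y + W1 \<mu> \<nu>)) \<le> Dlip f z"
    unfolding Dlip_def
    by (rule SUP_upper2[where i="((x, \<mu>), (y, \<nu>))"]) (use assms False in auto)
  then have "ennreal (dist (f x \<mu> z) (f y \<nu> z) / (dist x y + W1 \<mu> \<nu>)) * ennreal (dist x y + W1 \<mu> \<nu>)
     \<le> Dlip f z * ennreal (dist x y + W1 \<mu> \<nu>)" by (rule mult_right_mono) simp
  moreover have "ennreal (dist (f x \<mu> z) (f y \<nu> z) / (dist x y + W1 \<mu> \<nu>)) * ennreal (dist x y + W1 \<mu> \<nu>)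
     = ennreal (dist (f x \<mu> z) (f y \<nu> z))"
    using pos by (simp add: ennreal_mult[symmetric])
  ultimately show ?thesis by simp
qed

locale mfs0 =
  fixes A :: "real^'d^'d" and \<delta> :: real and \<theta> :: "(real^'m) measure"
    and f :: "real^'d \<Rightarrow> (real^'d) measure \<Rightarrow> real^'m \<Rightarrow> real^'d"
  assumes theta: "prob_space \<theta>" and theta_sets[measurable_cong]: "sets \<theta> = sets borel"
    and f_meas: "\<And>\<mu>. \<mu> \<in> P1 \<Longrightarrow> (\<lambda>(x, z). f x \<mu> z) \<in> borel_measurable (borel \<Otimes>\<^sub>M borel)"
    and D_meas[measurable]: "Dlip f \<in> borel_measurable \<theta>"
    and A1: "(\<integral>\<^sup>+ z. Dlip f z \<partial>\<theta>) < \<infinity>"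
    and A2: "(\<integral>\<^sup>+ z. ennreal (norm (f 0 (return borel 0) z)) \<partial>\<theta>) < \<infinity>"
    and delta_pos: "\<delta> > 0"
    and contr: "onorm (\<lambda>x. A *v x) + 2 * \<delta> * enn2real (\<integral>\<^sup>+ z. Dlip f z \<partial>\<theta>) < 1"
begin
definition "a = onorm (\<lambda>x. A *v x)"
definition "S = (\<integral>\<^sup>+ z. Dlip f z \<partial>\<theta>)"
definition "\<sigma> = enn2real S"

lemma a_nonneg: "a \<ge> 0"
  unfolding a_def by (rule onorm_pos_le) simp

lemma S_eq: "S = ennreal \<sigma>"
  using A1 unfolding \<sigma>_def S_def by (cases "(\<integral>\<^sup>+ z. Dlip f z \<partial>\<theta>)") auto

lemma sigma_nonneg: "\<sigma> \<ge> 0" unfolding \<sigma>_def by simp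
definition "q = a + 2 * \<delta> * \<sigma>"

lemma q_nonneg: "q \<ge> 0" unfolding q_def using a_nonneg sigma_nonneg delta_pos by simp
lemma q_lt1: "q < 1" unfolding q_def a_def \<sigma>_def S_def using contr by simp

end

locale mfs = mfs0 A \<delta> \<theta> f for A :: "real^'d^'d" and \<delta> :: real and \<theta> :: "(real^'m) measure"
    and f :: "real^'d \<Rightarrow> (real^'d) measure \<Rightarrow> real^'m \<Rightarrow> real^'d" +
  fixes \<rho> :: "'a measure"
  assumes rho: "prob_space \<rho>"
begin

abbreviation "\<Omega> \<equiv> \<rho> \<Otimes>\<^sub>M stream_space \<theta>"

definition "sh \<omega> = (fst \<omega>, stl (snd \<omega>))"

lemma sh_meas[measurable]: "sh \<in> measurable \<Omega> \<Omega>"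
  unfolding sh_def by measurable

lemma prob_Omega: "prob_space \<Omega>"
proof -
  interpret R: prob_space \<rho> by (rule rho)
  interpret T: prob_space \<theta> by (rule theta)
  interpret S: prob_space "stream_space \<theta>" by (rule T.prob_space_stream_space)
  interpret P: pair_prob_space \<rho> "stream_space \<theta>" ..
  show ?thesis by (rule P.prob_space_axioms)
qed

lemma K:
  assumes G[measurable]: "G \<in> borel_measurable (\<Omega> \<Otimes>\<^sub>M \<theta>)"
  shows "(\<integral>\<^sup>+\<omega>. G (sh \<omega>, shd (snd \<omega>)) \<partial>\<Omega>) = (\<integral>\<^sup>+p. G p \<partial>(\<Omega> \<Otimes>\<^sub>M \<theta>))"
proof -
  interpret R: prob_space \<rho> by (rule rho)
  interpret T: prob_space \<theta> by (rule theta)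
  interpret S: prob_space "stream_space \<theta>" by (rule T.prob_space_stream_space)
  interpret ST: pair_sigma_finite \<theta> "stream_space \<theta>" ..
  have "(\<integral>\<^sup>+\<omega>. G (sh \<omega>, shd (snd \<omega>)) \<partial>\<Omega>) = (\<integral>\<^sup>+a. \<integral>\<^sup>+s. G ((a, stl s), shd s) \<partial>stream_space \<theta> \<partial>\<rho>)"
    by (subst S.nn_integral_fst[symmetric]) (auto simp: sh_def)
  also have "\<dots> = (\<integral>\<^sup>+a. \<integral>\<^sup>+z. \<integral>\<^sup>+s. G ((a, s), z) \<partial>stream_space \<theta> \<partial>\<theta> \<partial>\<rho>)"
    by (intro nn_integral_cong, subst T.nn_integral_stream_space) auto
  also have "\<dots> = (\<integral>\<^sup>+a. \<integral>\<^sup>+s. \<integral>\<^sup>+z. G ((a, s), z) \<partial>\<theta> \<partial>stream_space \<theta> \<partial>\<rho>)"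
  proof (intro nn_integral_cong)
    fix a assume "a \<in> space \<rho>"
    show "(\<integral>\<^sup>+z. \<integral>\<^sup>+s. G ((a, s), z) \<partial>stream_space \<theta> \<partial>\<theta>) = (\<integral>\<^sup>+s. \<integral>\<^sup>+z. G ((a, s), z) \<partial>\<theta> \<partial>stream_space \<theta>)"
      by (rule ST.Fubini'[symmetric, where f="\<lambda>z s. G ((a, s), z)"]) (use \<open>a \<in> space \<rho>\<close> in simp)
  qed
  also have "\<dots> = (\<integral>\<^sup>+\<omega>. \<integral>\<^sup>+z. G (\<omega>, z) \<partial>\<theta> \<partial>\<Omega>)"
    by (subst S.nn_integral_fst[symmetric]) auto
  also have "\<dots> = (\<integral>\<^sup>+p. G p \<partial>(\<Omega> \<Otimes>\<^sub>M \<theta>))"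
    by (rule T.nn_integral_fst) simp
  finally show ?thesis .
qed


lemma emeasure_distr_borel:
  assumes [measurable]: "h \<in> borel_measurable M" "B \<in> sets borel"
  shows "emeasure (distr M borel h) B = (\<integral>\<^sup>+x. indicator B (h x) \<partial>M)"
proof -
  have "emeasure (distr M borel h) B = (\<integral>\<^sup>+x. indicator B x \<partial>distr M borel h)"
    by (simp add: nn_integral_indicator)
  also have "\<dots> = (\<integral>\<^sup>+x. indicator B (h x) \<partial>M)"
    by (intro nn_integral_distr) measurable
  finally show ?thesis .
qed

definition "law X = distr \<Omega> borel X"
definition "Phi \<mu> x z = A *v x + \<delta> *\<^sub>R f x \<mu> z"
definition "T X \<omega> = Phi (law X) (X (sh \<omega>)) (shd (snd \<omega>))"
definition "e X Y = (\<integral>\<^sup>+\<omega>. ennreal (dist (X \<omega>) (Y \<omega>)) \<partial>\<Omega>)"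
definition "good X \<longleftrightarrow> X \<in> borel_measurable \<Omega> \<and> e X (\<lambda>_. 0) < \<infinity>"

lemma good_P1: assumes "good X" shows "law X \<in> P1"
proof -
  have [measurable]: "X \<in> borel_measurable \<Omega>" using assms by (simp add: good_def)
  have "(\<integral>\<^sup>+ x. ennreal (norm x) \<partial>law X) = e X (\<lambda>_. 0)"
    unfolding law_def e_def by (simp add: nn_integral_distr)
  then show ?thesis using assms prob_Omega
    by (auto simp: P1_def good_def law_def intro!: prob_space.prob_space_distr)
qed

lemma f_comp_meas:
  assumes "\<mu> \<in> P1" "X \<in> borel_measurable M" "Z \<in> borel_measurable M"
  shows "(\<lambda>\<omega>. f (X \<omega>) \<mu> (Z \<omega>)) \<in> borel_measurable M"
  using measurable_compose[OF measurable_Pair[OF assms(2,3)] f_meas[OF assms(1)]] by simp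

lemma Phi_comp_meas:
  assumes "\<mu> \<in> P1" "X \<in> borel_measurable M" "Z \<in> borel_measurable M"
  shows "(\<lambda>\<omega>. Phi \<mu> (X \<omega>) (Z \<omega>)) \<in> borel_measurable M"
proof -
  have [measurable]: "(\<lambda>x. A *v x) \<in> borel_measurable borel"
    by (intro borel_measurable_continuous_onI linear_continuous_on) simp
  have [measurable]: "X \<in> borel_measurable M" by fact
  have [measurable]: "(\<lambda>\<omega>. f (X \<omega>) \<mu> (Z \<omega>)) \<in> borel_measurable M" by (rule f_comp_meas[OF assms])
  show ?thesis unfolding Phi_def by measurable
qed

lemma shd_meas: "(\<lambda>\<omega>. shd (snd \<omega>)) \<in> borel_measurable \<Omega>"
proof -
  have "(\<lambda>\<omega>. shd (snd \<omega>)) \<in> measurable \<Omega> \<theta>" by measurable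
  then show ?thesis using theta_sets by (simp cong: measurable_cong_sets)
qed

lemma snd_meas: "snd \<in> borel_measurable (M \<Otimes>\<^sub>M \<theta>)"
proof -
  have "snd \<in> measurable (M \<Otimes>\<^sub>M \<theta>) \<theta>" by measurable
  then show ?thesis using theta_sets by (simp cong: measurable_cong_sets)
qed

lemma T_meas: assumes "good X" shows "T X \<in> borel_measurable \<Omega>"
proof -
  have X[measurable]: "X \<in> borel_measurable \<Omega>" using assms by (simp add: good_def)
  have "(\<lambda>\<omega>. X (sh \<omega>)) \<in> borel_measurable \<Omega>" by measurable
  then show ?thesis unfolding T_def
    by (rule Phi_comp_meas[OF good_P1[OF assms] _ shd_meas])
qed

lemma Phi_pair_meas: assumes "good X"
  shows "(\<lambda>p. Phi (law X) (X (fst p)) (snd p)) \<in> borel_measurable (\<Omega> \<Otimes>\<^sub>M \<theta>)"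
proof -
  have X[measurable]: "X \<in> borel_measurable \<Omega>" using assms by (simp add: good_def)
  have "(\<lambda>p. X (fst p)) \<in> borel_measurable (\<Omega> \<Otimes>\<^sub>M \<theta>)" by measurable
  then show ?thesis by (rule Phi_comp_meas[OF good_P1[OF assms] _ snd_meas])
qed

lemma T_law: assumes "good X" shows "law (T X) = Psi A \<delta> f \<theta> (law X)"
proof (rule measure_eqI)
  interpret TH: prob_space \<theta> by (rule theta)
  have X[measurable]: "X \<in> borel_measurable \<Omega>" using assms by (simp add: good_def)
  have P: "law X \<in> P1" by (rule good_P1[OF assms])
  have sl[measurable_cong]: "sets (law X) = sets borel" by (simp add: law_def)
  show "sets (law (T X)) = sets (Psi A \<delta> f \<theta> (law X))" by (simp add: law_def Psi_def)
  fix B assume "B \<in> sets (law (T X))"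
  then have B[measurable]: "B \<in> sets borel" by (simp add: law_def)
  have PM[measurable]: "(\<lambda>p. Phi (law X) (X (fst p)) (snd p)) \<in> borel_measurable (\<Omega> \<Otimes>\<^sub>M \<theta>)"
    by (rule Phi_pair_meas[OF assms])
  have "emeasure (law (T X)) B = (\<integral>\<^sup>+\<omega>. indicator B (T X \<omega>) \<partial>\<Omega>)"
    unfolding law_def by (rule emeasure_distr_borel[OF T_meas[OF assms] B])
  also have "\<dots> = (\<integral>\<^sup>+p. indicator B (Phi (law X) (X (fst p)) (snd p)) \<partial>(\<Omega> \<Otimes>\<^sub>M \<theta>))"
    unfolding T_def using K[of "\<lambda>p. indicator B (Phi (law X) (X (fst p)) (snd p))"] by simp
  also have "\<dots> = (\<integral>\<^sup>+q. indicator B (Phi (law X) (fst q) (snd q)) \<partial>distr (\<Omega> \<Otimes>\<^sub>M \<theta>) (borel \<Otimes>\<^sub>M \<theta>) (\<lambda>(\<omega>, z). (X \<omega>, id z)))"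
  proof -
    have [measurable]: "(\<lambda>q. Phi (law X) (fst q) (snd q)) \<in> borel_measurable (borel \<Otimes>\<^sub>M \<theta>)"
      by (rule Phi_comp_meas[OF P _ snd_meas]) simp
    show ?thesis by (subst nn_integral_distr) (auto intro!: nn_integral_cong)
  qed
  also have "distr (\<Omega> \<Otimes>\<^sub>M \<theta>) (borel \<Otimes>\<^sub>M \<theta>) (\<lambda>(\<omega>, z). (X \<omega>, id z)) = law X \<Otimes>\<^sub>M \<theta>"
  proof -
    have "distr \<Omega> borel X \<Otimes>\<^sub>M distr \<theta> \<theta> id = distr (\<Omega> \<Otimes>\<^sub>M \<theta>) (borel \<Otimes>\<^sub>M \<theta>) (\<lambda>(x, y). (X x, id y))"
    proof (rule pair_measure_distr)
      show "sigma_finite_measure (distr \<theta> \<theta> id)"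
        using TH.sigma_finite_measure_axioms by (simp add: id_def)
    qed simp_all
    then show ?thesis by (simp add: law_def id_def)
  qed
  also have "(\<integral>\<^sup>+q. indicator B (Phi (law X) (fst q) (snd q)) \<partial>(law X \<Otimes>\<^sub>M \<theta>)) = emeasure (Psi A \<delta> f \<theta> (law X)) B"
  proof -
    have "(\<lambda>q. Phi (law X) (fst q) (snd q)) \<in> borel_measurable (law X \<Otimes>\<^sub>M \<theta>)"
      by (rule Phi_comp_meas[OF P _ snd_meas]) simp
    then show ?thesis unfolding Psi_def
      by (subst emeasure_distr_borel) (auto simp: Phi_def case_prod_beta cong: measurable_cong)
  qed
  finally show "emeasure (law (T X)) B = emeasure (Psi A \<delta> f \<theta> (law X)) B" .
qed


lemma Phi_lip:
  assumes "\<mu> \<in> P1" "\<nu> \<in> P1"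
  shows "ennreal (dist (Phi \<mu> x z) (Phi \<nu> y z)) \<le> ennreal a * ennreal (dist x y) + ennreal \<delta> * (Dlip f z * ennreal (dist x y + W1 \<mu> \<nu>))"
proof -
  have "dist (Phi \<mu> x z) (Phi \<nu> y z) \<le> dist (A *v x) (A *v y) + dist (\<delta> *\<^sub>R f x \<mu> z) (\<delta> *\<^sub>R f y \<nu> z)"
    unfolding Phi_def by (rule dist_triangle_add)
  also have "dist (A *v x) (A *v y) \<le> a * dist x y"
  proof -
    have "dist (A *v x) (A *v y) = norm (A *v (x - y))" by (simp add: dist_norm matrix_vector_mult_diff_distrib)
    also have "\<dots> \<le> a * norm (x - y)" unfolding a_def by (rule onorm) simp
    finally show ?thesis by (simp add: dist_norm)
  qed
  also have "dist (\<delta> *\<^sub>R f x \<mu> z) (\<delta> *\<^sub>R f y \<nu> z) = \<delta> * dist (f x \<mu> z) (f y \<nu> z)"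
    using delta_pos by (simp add: dist_norm flip: scaleR_diff_right)
  finally have r: "dist (Phi \<mu> x z) (Phi \<nu> y z) \<le> a * dist x y + \<delta> * dist (f x \<mu> z) (f y \<nu> z)"
    by simp
  have "ennreal (dist (Phi \<mu> x z) (Phi \<nu> y z)) \<le> ennreal (a * dist x y + \<delta> * dist (f x \<mu> z) (f y \<nu> z))"
    using r by (rule ennreal_leI)
  also have "\<dots> = ennreal a * ennreal (dist x y) + ennreal \<delta> * ennreal (dist (f x \<mu> z) (f y \<nu> z))"
    using a_nonneg delta_pos by (simp add: ennreal_plus ennreal_mult)
  also have "\<dots> \<le> ennreal a * ennreal (dist x y) + ennreal \<delta> * (Dlip f z * ennreal (dist x y + W1 \<mu> \<nu>))"
    by (intro add_left_mono mult_left_mono f_lip assms) simp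
  finally show ?thesis .
qed

lemma int_fst:
  assumes [measurable]: "h \<in> borel_measurable \<Omega>"
  shows "(\<integral>\<^sup>+p. h (fst p) \<partial>(\<Omega> \<Otimes>\<^sub>M \<theta>)) = (\<integral>\<^sup>+\<omega>. h \<omega> \<partial>\<Omega>)"
proof -
  interpret TH: prob_space \<theta> by (rule theta)
  have "(\<integral>\<^sup>+p. h (fst p) \<partial>(\<Omega> \<Otimes>\<^sub>M \<theta>)) = (\<integral>\<^sup>+\<omega>. \<integral>\<^sup>+z. h \<omega> \<partial>\<theta> \<partial>\<Omega>)"
    by (subst TH.nn_integral_fst[symmetric]) auto
  also have "\<dots> = (\<integral>\<^sup>+\<omega>. h \<omega> \<partial>\<Omega>)" by (simp add: TH.emeasure_space_1)
  finally show ?thesis .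
qed

lemma int_mult:
  assumes [measurable]: "c \<in> borel_measurable \<Omega>"
  shows "(\<integral>\<^sup>+p. Dlip f (snd p) * c (fst p) \<partial>(\<Omega> \<Otimes>\<^sub>M \<theta>)) = S * (\<integral>\<^sup>+\<omega>. c \<omega> \<partial>\<Omega>)"
proof -
  interpret TH: prob_space \<theta> by (rule theta)
  have [measurable]: "(\<lambda>p. Dlip f (snd p)) \<in> borel_measurable (\<Omega> \<Otimes>\<^sub>M \<theta>)" by measurable
  have "(\<integral>\<^sup>+p. Dlip f (snd p) * c (fst p) \<partial>(\<Omega> \<Otimes>\<^sub>M \<theta>)) = (\<integral>\<^sup>+\<omega>. \<integral>\<^sup>+z. Dlip f z * c \<omega> \<partial>\<theta> \<partial>\<Omega>)"
    by (subst TH.nn_integral_fst[symmetric]) auto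
  also have "\<dots> = (\<integral>\<^sup>+\<omega>. S * c \<omega> \<partial>\<Omega>)"
    unfolding S_def by (intro nn_integral_cong nn_integral_multc) simp
  also have "\<dots> = S * (\<integral>\<^sup>+\<omega>. c \<omega> \<partial>\<Omega>)" by (rule nn_integral_cmult) simp
  finally show ?thesis .
qed

lemma e_T:
  assumes gX: "good X" and gY: "good Y"
  shows "e (T X) (T Y) \<le> ennreal a * e X Y + ennreal \<delta> * S * (e X Y + ennreal (W1 (law X) (law Y)))"
proof -
  interpret O: prob_space \<Omega> by (rule prob_Omega)
  have X[measurable]: "X \<in> borel_measurable \<Omega>" using gX by (simp add: good_def)
  have Y[measurable]: "Y \<in> borel_measurable \<Omega>" using gY by (simp add: good_def)
  have PX: "law X \<in> P1" and PY: "law Y \<in> P1" using good_P1 gX gY by auto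
  define W where "W = W1 (law X) (law Y)"
  have W0: "W \<ge> 0" unfolding W_def W1_def by simp
  have [measurable]: "(\<lambda>p. Phi (law X) (X (fst p)) (snd p)) \<in> borel_measurable (\<Omega> \<Otimes>\<^sub>M \<theta>)"
    by (rule Phi_pair_meas[OF gX])
  have [measurable]: "(\<lambda>p. Phi (law Y) (Y (fst p)) (snd p)) \<in> borel_measurable (\<Omega> \<Otimes>\<^sub>M \<theta>)"
    by (rule Phi_pair_meas[OF gY])
  have [measurable]: "(\<lambda>p. Dlip f (snd p)) \<in> borel_measurable (\<Omega> \<Otimes>\<^sub>M \<theta>)" by measurable
  have "e (T X) (T Y) = (\<integral>\<^sup>+\<omega>. (\<lambda>p. ennreal (dist (Phi (law X) (X (fst p)) (snd p)) (Phi (law Y) (Y (fst p)) (snd p)))) (sh \<omega>, shd (snd \<omega>)) \<partial>\<Omega>)"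
    by (simp add: e_def T_def)
  also have "\<dots> = (\<integral>\<^sup>+p. ennreal (dist (Phi (law X) (X (fst p)) (snd p)) (Phi (law Y) (Y (fst p)) (snd p))) \<partial>(\<Omega> \<Otimes>\<^sub>M \<theta>))"
    by (rule K) measurable
  also have "\<dots> \<le> (\<integral>\<^sup>+p. ennreal a * ennreal (dist (X (fst p)) (Y (fst p))) + ennreal \<delta> * (Dlip f (snd p) * ennreal (dist (X (fst p)) (Y (fst p)) + W)) \<partial>(\<Omega> \<Otimes>\<^sub>M \<theta>))"
    unfolding W_def by (intro nn_integral_mono Phi_lip PX PY)
  also have "\<dots> = ennreal a * (\<integral>\<^sup>+p. ennreal (dist (X (fst p)) (Y (fst p))) \<partial>(\<Omega> \<Otimes>\<^sub>M \<theta>))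
       + ennreal \<delta> * (\<integral>\<^sup>+p. Dlip f (snd p) * ennreal (dist (X (fst p)) (Y (fst p)) + W) \<partial>(\<Omega> \<Otimes>\<^sub>M \<theta>))"
    by (subst nn_integral_add) (auto simp: nn_integral_cmult)
  also have "(\<integral>\<^sup>+p. ennreal (dist (X (fst p)) (Y (fst p))) \<partial>(\<Omega> \<Otimes>\<^sub>M \<theta>)) = e X Y"
    unfolding e_def by (rule int_fst[where h="\<lambda>\<omega>. ennreal (dist (X \<omega>) (Y \<omega>))"]) measurable
  also have "(\<integral>\<^sup>+p. Dlip f (snd p) * ennreal (dist (X (fst p)) (Y (fst p)) + W) \<partial>(\<Omega> \<Otimes>\<^sub>M \<theta>))
      = S * (\<integral>\<^sup>+\<omega>. ennreal (dist (X \<omega>) (Y \<omega>) + W) \<partial>\<Omega>)"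
    by (rule int_mult[where c="\<lambda>\<omega>. ennreal (dist (X \<omega>) (Y \<omega>) + W)"]) measurable
  also have "(\<integral>\<^sup>+\<omega>. ennreal (dist (X \<omega>) (Y \<omega>) + W) \<partial>\<Omega>) = e X Y + ennreal W"
  proof -
    have "(\<integral>\<^sup>+\<omega>. ennreal (dist (X \<omega>) (Y \<omega>) + W) \<partial>\<Omega>) = (\<integral>\<^sup>+\<omega>. ennreal (dist (X \<omega>) (Y \<omega>)) + ennreal W \<partial>\<Omega>)"
      using W0 by (intro nn_integral_cong) (simp add: ennreal_plus)
    also have "\<dots> = e X Y + ennreal W"
      unfolding e_def by (subst nn_integral_add) (auto simp: O.emeasure_space_1)
    finally show ?thesis .
  qed
  finally show ?thesis unfolding W_def by (simp add: mult.assoc)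
qed



lemma e_meas: "X \<in> borel_measurable \<Omega> \<Longrightarrow> Y \<in> borel_measurable \<Omega> \<Longrightarrow> e X Y = e Y X"
  unfolding e_def by (simp add: dist_commute)

lemma e_sym: "e X Y = e Y X"
  unfolding e_def by (simp add: dist_commute)

lemma e_tri:
  fixes X Y Z :: "'a \<times> (real^'m) stream \<Rightarrow> real^'d"
  assumes "X \<in> borel_measurable \<Omega>" "Y \<in> borel_measurable \<Omega>" "Z \<in> borel_measurable \<Omega>"
  shows "e X Z \<le> e X Y + e Y Z"
proof -
  have m1: "(\<lambda>\<omega>. ennreal (dist (X \<omega>) (Y \<omega>))) \<in> borel_measurable \<Omega>"
    using measurable_compose[OF borel_measurable_dist[OF assms(1) assms(2)] measurable_ennreal] by simp
  have m2: "(\<lambda>\<omega>. ennreal (dist (Y \<omega>) (Z \<omega>))) \<in> borel_measurable \<Omega>"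
    using measurable_compose[OF borel_measurable_dist[OF assms(2) assms(3)] measurable_ennreal] by simp
  have "e X Z \<le> (\<integral>\<^sup>+\<omega>. ennreal (dist (X \<omega>) (Y \<omega>)) + ennreal (dist (Y \<omega>) (Z \<omega>)) \<partial>\<Omega>)"
    unfolding e_def by (intro nn_integral_mono) (simp add: dist_triangle flip: ennreal_plus)
  also have "\<dots> = e X Y + e Y Z" unfolding e_def
    using nn_integral_add[OF m1 m2] by simp
  finally show ?thesis .
qed

lemma W1_le_e:
  assumes "X \<in> borel_measurable \<Omega>" "Y \<in> borel_measurable \<Omega>"
  shows "ennreal (W1 (law X) (law Y)) \<le> e X Y"
  unfolding law_def e_def by (rule coupling_W1_le[OF prob_Omega assms])

lemma e_Tq:
  assumes gX: "good X" and gY: "good Y"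
  shows "e (T X) (T Y) \<le> ennreal q * e X Y"
proof -
  have X: "X \<in> borel_measurable \<Omega>" and Y: "Y \<in> borel_measurable \<Omega>" using gX gY by (auto simp: good_def)
  have "e (T X) (T Y) \<le> ennreal a * e X Y + ennreal \<delta> * S * (e X Y + ennreal (W1 (law X) (law Y)))"
    by (rule e_T[OF gX gY])
  also have "\<dots> \<le> ennreal a * e X Y + ennreal \<delta> * ennreal \<sigma> * (e X Y + e X Y)"
    using W1_le_e[OF X Y] by (auto simp: S_eq intro!: add_left_mono mult_left_mono)
  also have "\<dots> = ennreal q * e X Y"
  proof -
    have "ennreal q = ennreal a + 2 * (ennreal \<delta> * ennreal \<sigma>)"
      unfolding q_def using a_nonneg delta_pos sigma_nonneg
      by (simp add: ennreal_plus ennreal_mult mult.assoc)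
    then show ?thesis by (simp add: distrib_right mult_2 algebra_simps)
  qed
  finally show ?thesis .
qed

lemma law_zero: "law (\<lambda>_. 0) = return borel 0"
proof (rule measure_eqI)
  interpret O: prob_space \<Omega> by (rule prob_Omega)
  fix B assume "B \<in> sets (law (\<lambda>_. 0))"
  then have B: "B \<in> sets borel" by (simp add: law_def)
  show "emeasure (law (\<lambda>_. 0)) B = emeasure (return borel 0) B"
    unfolding law_def using B by (simp add: emeasure_distr_borel O.emeasure_space_1)
qed (simp add: law_def)

lemma good_zero: "good (\<lambda>_. 0)"
  by (simp add: good_def e_def)

lemma int_snd:
  assumes [measurable]: "h \<in> borel_measurable \<theta>"
  shows "(\<integral>\<^sup>+p. h (snd p) \<partial>(\<Omega> \<Otimes>\<^sub>M \<theta>)) = (\<integral>\<^sup>+z. h z \<partial>\<theta>)"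
proof -
  interpret TH: prob_space \<theta> by (rule theta)
  interpret O: prob_space \<Omega> by (rule prob_Omega)
  have "(\<integral>\<^sup>+p. h (snd p) \<partial>(\<Omega> \<Otimes>\<^sub>M \<theta>)) = (\<integral>\<^sup>+\<omega>. \<integral>\<^sup>+z. h z \<partial>\<theta> \<partial>\<Omega>)"
    by (subst TH.nn_integral_fst[symmetric]) auto
  also have "\<dots> = (\<integral>\<^sup>+z. h z \<partial>\<theta>)" by (simp add: O.emeasure_space_1)
  finally show ?thesis .
qed

lemma T_zero_fin: "e (T (\<lambda>_. 0)) (\<lambda>_. 0) < \<infinity>"
proof -
  have P0: "return borel (0::real^'d) \<in> P1"
    by (auto simp: P1_def prob_space_return nn_integral_return)
  have [measurable]: "(\<lambda>z. f 0 (return borel 0) z) \<in> borel_measurable \<theta>"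
    using f_comp_meas[OF P0, of "\<lambda>_. 0" \<theta> "\<lambda>z. z"] theta_sets by (simp cong: measurable_cong_sets)
  have [measurable]: "(\<lambda>p. f 0 (return borel 0) (snd p)) \<in> borel_measurable (\<Omega> \<Otimes>\<^sub>M \<theta>)"
    using measurable_compose[OF measurable_snd, of "\<lambda>z. f 0 (return borel 0) z" \<theta> borel \<Omega>] by simp
  have "e (T (\<lambda>_. 0)) (\<lambda>_. 0) = (\<integral>\<^sup>+\<omega>. (\<lambda>p. ennreal (\<delta> * norm (f 0 (return borel 0) (snd p)))) (sh \<omega>, shd (snd \<omega>)) \<partial>\<Omega>)"
    using delta_pos by (simp add: e_def T_def Phi_def law_zero)
  also have "\<dots> = (\<integral>\<^sup>+p. ennreal (\<delta> * norm (f 0 (return borel 0) (snd p))) \<partial>(\<Omega> \<Otimes>\<^sub>M \<theta>))"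
    by (rule K) measurable
  also have "\<dots> = (\<integral>\<^sup>+z. ennreal (\<delta> * norm (f 0 (return borel 0) z)) \<partial>\<theta>)"
    by (rule int_snd[where h="\<lambda>z. ennreal (\<delta> * norm (f 0 (return borel 0) z))"]) measurable
  also have "\<dots> = ennreal \<delta> * (\<integral>\<^sup>+z. ennreal (norm (f 0 (return borel 0) z)) \<partial>\<theta>)"
    using delta_pos by (simp add: ennreal_mult nn_integral_cmult)
  also have "\<dots> < \<infinity>" using A2 by (simp add: ennreal_mult_less_top)
  finally show ?thesis .
qed

lemma good_T: assumes gX: "good X" shows "good (T X)"
proof -
  have X: "X \<in> borel_measurable \<Omega>" using gX by (simp add: good_def)
  have TX: "T X \<in> borel_measurable \<Omega>" by (rule T_meas[OF gX])
  have T0: "T (\<lambda>_. 0) \<in> borel_measurable \<Omega>" by (rule T_meas[OF good_zero])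
  have "e (T X) (\<lambda>_. 0) \<le> e (T X) (T (\<lambda>_. 0)) + e (T (\<lambda>_. 0)) (\<lambda>_. 0)"
    by (rule e_tri[OF TX T0]) simp
  also have "\<dots> \<le> ennreal q * e X (\<lambda>_. 0) + e (T (\<lambda>_. 0)) (\<lambda>_. 0)"
    by (intro add_right_mono e_Tq gX good_zero)
  also have "\<dots> < \<infinity>" using gX T_zero_fin by (auto simp: good_def ennreal_mult_less_top)
  finally show ?thesis using TX by (simp add: good_def)
qed

lemma good_iter: "good X \<Longrightarrow> good ((T ^^ n) X)"
  by (induction n) (auto intro: good_T)

lemma law_iter: "good X \<Longrightarrow> law ((T ^^ n) X) = (Psi A \<delta> f \<theta> ^^ n) (law X)"
  by (induction n) (auto simp: T_law good_iter)

lemma e_iter: "good X \<Longrightarrow> good Y \<Longrightarrow> e ((T ^^ n) X) ((T ^^ n) Y) \<le> ennreal (q ^ n) * e X Y"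
proof (induction n)
  case (Suc n)
  have "e ((T ^^ Suc n) X) ((T ^^ Suc n) Y) \<le> ennreal q * e ((T ^^ n) X) ((T ^^ n) Y)"
    using Suc by (simp add: e_Tq good_iter)
  also have "\<dots> \<le> ennreal q * (ennreal (q ^ n) * e X Y)"
    using Suc by (intro mult_left_mono) auto
  also have "\<dots> = ennreal (q ^ Suc n) * e X Y"
    using q_nonneg by (simp add: ennreal_mult mult.assoc)
  finally show ?case .
qed simp

lemma e_fin:
  fixes X Y :: "'a \<times> (real^'m) stream \<Rightarrow> real^'d"
  shows "good X \<Longrightarrow> good Y \<Longrightarrow> e X Y < \<infinity>"
proof -
  assume gX: "good X" and gY: "good Y"
  then have "e X Y \<le> e X (\<lambda>_. 0) + e (\<lambda>_. 0) Y"
    by (intro e_tri) (auto simp: good_def)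
  also have "\<dots> < \<infinity>" using gX gY by (auto simp: good_def e_sym[of "\<lambda>_. 0"])
  finally show ?thesis .
qed


lemma seq_tail_bound:
  fixes x :: "nat \<Rightarrow> 'b::banach"
  shows "ennreal (dist (x n) (lim x)) \<le> (\<Sum>k. ennreal (dist (x (Suc (k+n))) (x (k+n))))"
proof (cases "(\<Sum>k. ennreal (dist (x (Suc (k+n))) (x (k+n)))) = \<top>")
  case True then show ?thesis by simp
next
  case False
  define u where "u k = x (Suc (k+n)) - x (k+n)" for k
  have sn: "summable (\<lambda>k. norm (u k))"
    using summable_suminf_not_top[OF _ False] by (simp add: u_def dist_norm)
  then have su: "summable u" by (rule summable_norm_cancel)
  have "(\<lambda>m. x n + (\<Sum>k<m. u k)) \<longlonglongrightarrow> x n + suminf u"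
    using su by (intro tendsto_add tendsto_const summable_LIMSEQ)
  moreover have "x n + (\<Sum>k<m. u k) = x (m + n)" for m
    using sum_lessThan_telescope[of "\<lambda>k. x (k+n)" m] by (simp add: u_def)
  ultimately have "(\<lambda>m. x (m + n)) \<longlonglongrightarrow> x n + suminf u" by simp
  then have "x \<longlonglongrightarrow> x n + suminf u" by (rule LIMSEQ_offset)
  then have "lim x = x n + suminf u" by (rule limI)
  then have "dist (x n) (lim x) = norm (suminf u)" by (simp add: dist_norm)
  also have "\<dots> \<le> (\<Sum>k. norm (u k))" by (rule summable_norm[OF sn])
  finally have "ennreal (dist (x n) (lim x)) \<le> ennreal (\<Sum>k. norm (u k))" by (rule ennreal_leI)
  also have "\<dots> = (\<Sum>k. ennreal (norm (u k)))" using sn by (simp add: suminf_ennreal2)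
  also have "\<dots> = (\<Sum>k. ennreal (dist (x (Suc (k+n))) (x (k+n))))" by (simp add: u_def dist_norm)
  finally show ?thesis .
qed

lemma existence:
  fixes X0 :: "'a \<times> (real^'m) stream \<Rightarrow> real^'d"
  assumes g0: "good X0"
  obtains Xi C where "good Xi" "law (T Xi) = law Xi" "C \<ge> 0" "\<And>n. e ((T^^n) X0) Xi \<le> ennreal (C * q^n)"
proof -
  define Xn where "Xn n = (T^^n) X0" for n
  have gn: "good (Xn n)" for n using good_iter[OF g0] by (simp add: Xn_def)
  have mn[measurable]: "Xn n \<in> borel_measurable \<Omega>" for n using gn by (simp add: good_def)
  define c0 where "c0 = enn2real (e (Xn 1) (Xn 0))"
  have c0: "e (Xn 1) (Xn 0) = ennreal c0" "c0 \<ge> 0"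
    using e_fin[OF gn gn, of 1 0] unfolding c0_def by (cases "e (Xn 1) (Xn 0)", simp_all)
  have d: "e (Xn (Suc m)) (Xn m) \<le> ennreal (c0 * q^m)" for m
  proof -
    have "Xn (Suc m) = (T^^m) (Xn 1)" "Xn m = (T^^m) (Xn 0)"
      by (simp_all add: Xn_def funpow_swap1)
    then have "e (Xn (Suc m)) (Xn m) \<le> ennreal (q^m) * e (Xn 1) (Xn 0)"
      using e_iter[OF gn gn] by simp
    also have "\<dots> = ennreal (c0 * q^m)" using c0 q_nonneg by (simp add: ennreal_mult mult.commute)
    finally show ?thesis .
  qed
  define Xi where "Xi \<omega> = lim (\<lambda>n. Xn n \<omega>)" for \<omega>
  have mi[measurable]: "Xi \<in> borel_measurable \<Omega>" unfolding Xi_def by measurable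
  define C where "C = c0 / (1 - q)"
  have C0: "C \<ge> 0" using c0 q_lt1 by (simp add: C_def)
  have bound: "e (Xn n) Xi \<le> ennreal (C * q^n)" for n
  proof -
    have "e (Xn n) Xi \<le> (\<integral>\<^sup>+\<omega>. (\<Sum>k. ennreal (dist (Xn (Suc (k+n)) \<omega>) (Xn (k+n) \<omega>))) \<partial>\<Omega>)"
      unfolding e_def Xi_def by (intro nn_integral_mono seq_tail_bound)
    also have "\<dots> = (\<Sum>k. e (Xn (Suc (k+n))) (Xn (k+n)))" unfolding e_def by (rule nn_integral_suminf) measurable
    also have "\<dots> \<le> (\<Sum>k. ennreal (c0 * q^(k+n)))" by (rule suminf_le) (auto intro: d)
    also have "\<dots> = ennreal (C * q^n)"
    proof -
      have eq: "(\<lambda>k. c0 * q^(k+n)) = (\<lambda>k. (c0 * q^n) * q^k)" by (simp add: power_add mult_ac)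
      have "(\<lambda>k. (c0 * q^n) * q^k) sums ((c0 * q^n) * (1 / (1 - q)))"
        using q_nonneg q_lt1 by (intro sums_mult geometric_sums) simp
      then have s2: "(\<lambda>k. c0 * q^(k+n)) sums ((c0 * q^n) * (1 / (1 - q)))"
        by (subst eq)
      have "(\<Sum>k. ennreal (c0 * q^(k+n))) = ennreal ((c0 * q^n) * (1 / (1 - q)))"
        using c0 q_nonneg by (intro suminf_ennreal_eq[OF _ s2]) auto
      then show ?thesis by (simp add: C_def)
    qed
    finally show ?thesis .
  qed
  have gi: "good Xi"
  proof -
    have "e Xi (\<lambda>_. 0) \<le> e Xi (Xn 0) + e (Xn 0) (\<lambda>_. 0)" by (rule e_tri) auto
    also have "\<dots> < \<infinity>"
    proof -
      have "e Xi (Xn 0) < \<infinity>" using bound[of 0] by (simp add: e_sym[of Xi] le_less_trans)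
      moreover have "e (Xn 0) (\<lambda>_. 0) < \<infinity>" using gn[of 0] by (simp add: good_def)
      ultimately show ?thesis by simp
    qed
    finally show ?thesis by (simp add: good_def)
  qed
  have TXi[measurable]: "T Xi \<in> borel_measurable \<Omega>" by (rule T_meas[OF gi])
  have step: "e (T Xi) Xi \<le> ennreal (2 * C * q^Suc n)" for n
  proof -
    have "e (T Xi) Xi \<le> e (T Xi) (Xn (Suc n)) + e (Xn (Suc n)) Xi" by (rule e_tri) auto
    also have "e (T Xi) (Xn (Suc n)) = e (T Xi) (T (Xn n))" by (simp add: Xn_def)
    also have "\<dots> \<le> ennreal q * e Xi (Xn n)" by (rule e_Tq[OF gi gn])
    also have "\<dots> \<le> ennreal q * ennreal (C * q^n)" using bound[of n] by (intro mult_left_mono) (auto simp: e_sym[of Xi])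
    also have "\<dots> = ennreal (C * q^Suc n)" using q_nonneg C0 by (simp add: ennreal_mult[symmetric] mult_ac)
    also have "e (Xn (Suc n)) Xi \<le> ennreal (C * q^Suc n)" by (rule bound)
    also have "ennreal (C * q^Suc n) + ennreal (C * q^Suc n) = ennreal (2 * C * q^Suc n)"
      using q_nonneg C0 by (simp add: ennreal_plus[symmetric])
    finally show ?thesis by simp
  qed
  have lim0: "(\<lambda>n. ennreal (2 * C * q^Suc n)) \<longlonglongrightarrow> ennreal 0"
  proof (intro tendsto_ennrealI)
    have "(\<lambda>n. q^Suc n) \<longlonglongrightarrow> 0" using q_nonneg q_lt1
      by (intro LIMSEQ_Suc LIMSEQ_power_zero) auto
    then show "(\<lambda>n. 2 * C * q^Suc n) \<longlonglongrightarrow> 0" by (intro tendsto_mult_right_zero)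
  qed
  have "e (T Xi) Xi \<le> ennreal 0"
    by (rule LIMSEQ_le_const[OF lim0]) (use step in auto)
  then have e0: "e (T Xi) Xi = 0" by simp
  have "AE \<omega> in \<Omega>. ennreal (dist (T Xi \<omega>) (Xi \<omega>)) \<le> 0"
    using e0 unfolding e_def by (subst (asm) nn_integral_0_iff_AE) auto
  then have ae: "AE \<omega> in \<Omega>. T Xi \<omega> = Xi \<omega>" by eventually_elim simp
  have "law (T Xi) = law Xi" unfolding law_def
    by (rule distr_cong_AE[OF refl refl ae]) auto
  then show ?thesis using that gi C0 bound unfolding Xn_def by blast
qed

lemma fixed_unique:
  fixes X Y :: "'a \<times> (real^'m) stream \<Rightarrow> real^'d"
  assumes gX: "good X" and gY: "good Y" and fX: "law (T X) = law X" and fY: "law (T Y) = law Y"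
  shows "law X = law Y"
proof -
  have lX: "law ((T^^n) X) = law X" for n
  proof (induction n)
    case (Suc n)
    have "law ((T^^Suc n) X) = Psi A \<delta> f \<theta> (law ((T^^n) X))"
      using T_law[OF good_iter[OF gX, of n]] by simp
    also have "\<dots> = Psi A \<delta> f \<theta> (law X)" using Suc by simp
    also have "\<dots> = law X" using T_law[OF gX] fX by simp
    finally show ?case .
  qed simp
  have lY: "law ((T^^n) Y) = law Y" for n
  proof (induction n)
    case (Suc n)
    have "law ((T^^Suc n) Y) = Psi A \<delta> f \<theta> (law ((T^^n) Y))"
      using T_law[OF good_iter[OF gY, of n]] by simp
    also have "\<dots> = Psi A \<delta> f \<theta> (law Y)" using Suc by simp
    also have "\<dots> = law Y" using T_law[OF gY] fY by simp
    finally show ?case .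
  qed simp
  obtain c where c: "e X Y = ennreal c" "c \<ge> 0"
    using e_fin[OF gX gY] by (cases "e X Y") auto
  have W0: "W1 (law X) (law Y) \<ge> 0" by (simp add: W1_def)
  have le: "W1 (law X) (law Y) \<le> q^n * c" for n
  proof -
    have "ennreal (W1 (law X) (law Y)) = ennreal (W1 (law ((T^^n) X)) (law ((T^^n) Y)))" by (simp add: lX lY)
    also have "\<dots> \<le> e ((T^^n) X) ((T^^n) Y)"
      using good_iter[OF gX] good_iter[OF gY] by (intro W1_le_e) (auto simp: good_def)
    also have "\<dots> \<le> ennreal (q^n) * e X Y" by (rule e_iter[OF gX gY])
    also have "\<dots> = ennreal (q^n * c)" using c q_nonneg by (simp add: ennreal_mult)
    finally show ?thesis using c q_nonneg by (simp add: ennreal_le_iff)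
  qed
  have "(\<lambda>n. q^n * c) \<longlonglongrightarrow> 0" using q_nonneg q_lt1
    by (intro tendsto_mult_left_zero LIMSEQ_power_zero) auto
  then have "W1 (law X) (law Y) \<le> 0" by (rule LIMSEQ_le_const) (use le in auto)
  then have "W1 (law X) (law Y) = 0" using W0 by simp
  then show ?thesis using W1_zero_imp_eq good_P1 gX gY by blast
qed


lemma good_of_law:
  assumes "X \<in> borel_measurable \<Omega>" "law X \<in> P1"
  shows "good X"
proof -
  have [measurable]: "X \<in> borel_measurable \<Omega>" by fact
  have "(\<integral>\<^sup>+ x. ennreal (norm x) \<partial>law X) = e X (\<lambda>_. 0)"
    unfolding law_def e_def by (simp add: nn_integral_distr)
  then show ?thesis using assms by (auto simp: good_def P1_def)
qed

end

context mfs0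
begin

lemma fp_exists:
  assumes \<gamma>: "\<gamma> \<in> P1"
  shows "\<exists>\<mu>\<in>P1. Psi A \<delta> f \<theta> \<mu> = \<mu> \<and> (\<exists>C\<ge>0. \<forall>n. W1 ((Psi A \<delta> f \<theta> ^^ n) \<gamma>) \<mu> \<le> C * q^n)"
proof -
  interpret G: mfs A \<delta> \<theta> f \<gamma> using P1D(1)[OF \<gamma>] by (simp add: mfs_def mfs_axioms_def mfs0_axioms)
  have sg: "sets \<gamma> = sets borel" using P1D \<gamma> by auto
  interpret S: prob_space "stream_space \<theta>" using prob_space.prob_space_stream_space[OF theta] .
  have "fst \<in> measurable G.\<Omega> \<gamma>" by simp
  moreover have "measurable G.\<Omega> \<gamma> = measurable G.\<Omega> borel" by (rule measurable_cong_sets) (simp_all add: sg)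
  ultimately have m0: "fst \<in> borel_measurable G.\<Omega>" by simp
  have l0: "G.law fst = \<gamma>"
  proof -
    have "G.law fst = distr G.\<Omega> \<gamma> fst" unfolding G.law_def by (rule distr_cong) (simp_all add: sg)
    also have "\<dots> = \<gamma>" by (rule S.distr_pair_fst)
    finally show ?thesis .
  qed
  have g0: "G.good fst" by (rule G.good_of_law) (simp_all add: m0 l0 \<gamma>)
  obtain Xi C where gi: "G.good Xi" and fi: "G.law (G.T Xi) = G.law Xi" and C: "C \<ge> 0"
    and b: "\<And>n. G.e ((G.T^^n) fst) Xi \<le> ennreal (C * q^n)"
    using G.existence[OF g0] by blast
  have "Psi A \<delta> f \<theta> (G.law Xi) = G.law Xi" using G.T_law[OF gi] fi by simp
  moreover have "W1 ((Psi A \<delta> f \<theta> ^^ n) \<gamma>) (G.law Xi) \<le> C * q^n" for n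
  proof -
    have "ennreal (W1 ((Psi A \<delta> f \<theta> ^^ n) \<gamma>) (G.law Xi)) = ennreal (W1 (G.law ((G.T^^n) fst)) (G.law Xi))"
      using G.law_iter[OF g0, of n] l0 by simp
    also have "\<dots> \<le> G.e ((G.T^^n) fst) Xi"
      using G.good_iter[OF g0, of n] gi by (intro G.W1_le_e) (auto simp: G.good_def)
    also have "\<dots> \<le> ennreal (C * q^n)" by (rule b)
    finally show ?thesis using C q_nonneg by (simp add: ennreal_le_iff)
  qed
  ultimately show ?thesis using G.good_P1[OF gi] C by blast
qed

lemma fp_unique:
  assumes \<mu>: "\<mu> \<in> P1" and \<nu>: "\<nu> \<in> P1" and f\<mu>: "Psi A \<delta> f \<theta> \<mu> = \<mu>" and f\<nu>: "Psi A \<delta> f \<theta> \<nu> = \<nu>"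
  shows "\<mu> = \<nu>"
proof -
  interpret M: prob_space \<mu> using P1D \<mu> by auto
  interpret N: prob_space \<nu> using P1D \<nu> by auto
  interpret P: pair_prob_space \<mu> \<nu> ..
  interpret G: mfs A \<delta> \<theta> f "\<mu> \<Otimes>\<^sub>M \<nu>" using P.prob_space_axioms by (simp add: mfs_def mfs_axioms_def mfs0_axioms)
  interpret S: prob_space "stream_space \<theta>" using prob_space.prob_space_stream_space[OF theta] .
  have sm: "sets \<mu> = sets borel" "sets \<nu> = sets borel" using P1D \<mu> \<nu> by auto
  have mf: "fst \<in> measurable G.\<Omega> (\<mu> \<Otimes>\<^sub>M \<nu>)" by simp
  have mff: "fst \<in> borel_measurable (\<mu> \<Otimes>\<^sub>M \<nu>)"
  proof -
    have "fst \<in> measurable (\<mu> \<Otimes>\<^sub>M \<nu>) \<mu>" by simp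
    moreover have "measurable (\<mu> \<Otimes>\<^sub>M \<nu>) \<mu> = measurable (\<mu> \<Otimes>\<^sub>M \<nu>) borel" by (rule measurable_cong_sets) (simp_all add: sm)
    ultimately show ?thesis by simp
  qed
  have msf: "snd \<in> borel_measurable (\<mu> \<Otimes>\<^sub>M \<nu>)"
  proof -
    have "snd \<in> measurable (\<mu> \<Otimes>\<^sub>M \<nu>) \<nu>" by simp
    moreover have "measurable (\<mu> \<Otimes>\<^sub>M \<nu>) \<nu> = measurable (\<mu> \<Otimes>\<^sub>M \<nu>) borel" by (rule measurable_cong_sets) (simp_all add: sm)
    ultimately show ?thesis by simp
  qed
  define X where "X \<omega> = fst (fst \<omega>)" for \<omega> :: "((real^'d) \<times> (real^'d)) \<times> (real^'m) stream"
  define Y where "Y \<omega> = snd (fst \<omega>)" for \<omega> :: "((real^'d) \<times> (real^'d)) \<times> (real^'m) stream"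
  have mX: "X \<in> borel_measurable G.\<Omega>" unfolding X_def using measurable_compose[OF mf mff] by (simp add: comp_def)
  have mY: "Y \<in> borel_measurable G.\<Omega>" unfolding Y_def using measurable_compose[OF mf msf] by (simp add: comp_def)
  have d1: "distr G.\<Omega> (\<mu> \<Otimes>\<^sub>M \<nu>) fst = \<mu> \<Otimes>\<^sub>M \<nu>" by (rule S.distr_pair_fst)
  have lX: "G.law X = \<mu>"
  proof -
    have "G.law X = distr (distr G.\<Omega> (\<mu> \<Otimes>\<^sub>M \<nu>) fst) borel fst"
      unfolding G.law_def X_def by (subst distr_distr[OF mff mf]) (simp add: comp_def)
    also have "\<dots> = \<mu>" unfolding d1 by (rule P1_distr_fst[OF \<mu> \<nu>])
    finally show ?thesis .
  qed
  have lY: "G.law Y = \<nu>"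
  proof -
    have "G.law Y = distr (distr G.\<Omega> (\<mu> \<Otimes>\<^sub>M \<nu>) fst) borel snd"
      unfolding G.law_def Y_def by (subst distr_distr[OF msf mf]) (simp add: comp_def)
    also have "\<dots> = \<nu>" unfolding d1 by (rule P1_distr_snd[OF \<mu> \<nu>])
    finally show ?thesis .
  qed
  have gX: "G.good X" by (rule G.good_of_law[OF mX]) (simp add: lX \<mu>)
  have gY: "G.good Y" by (rule G.good_of_law[OF mY]) (simp add: lY \<nu>)
  have "G.law X = G.law Y"
    by (rule G.fixed_unique[OF gX gY]) (simp_all add: G.T_law gX gY lX lY f\<mu> f\<nu>)
  then show ?thesis using lX lY by simp
qed

end

lemma limsup_neg:
  fixes w :: "nat \<Rightarrow> real"
  assumes w0: "\<And>n. 0 \<le> w n" and wb: "\<And>n. w n \<le> C * r^n" and r: "0 < r" "r < 1" and C: "C \<ge> 0"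
  shows "limsup (\<lambda>n. log_rate (w n) n) < 0"
proof -
  define C' where "C' = C + 1"
  have C': "C' > 0" using C by (simp add: C'_def)
  have wb': "w n \<le> C' * r^n" for n
  proof -
    have "C * r^n \<le> C' * r^n" using r by (intro mult_right_mono) (auto simp: C'_def)
    then show ?thesis using wb[of n] by linarith
  qed
  have lr: "ln r < 0" using r by simp
  obtain N0 :: nat where N0: "2 * ln C' / (- ln r) < N0" using reals_Archimedean2 by blast
  define N where "N = max N0 1"
  have ev: "log_rate (w n) n \<le> ereal (ln r / 2)" if n: "n \<ge> N" for n
  proof (cases "w n = 0")
    case True then show ?thesis by (simp add: log_rate_def)
  next
    case False
    then have wp: "w n > 0" using w0[of n] by simp
    have npos: "real n > 0" using n by (simp add: N_def)
    have "ln (w n) \<le> ln (C' * r^n)" using wp wb'[of n] by simp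
    also have "\<dots> = ln C' + real n * ln r" using C' r by (simp add: ln_mult ln_realpow)
    finally have l1: "ln (w n) \<le> ln C' + real n * ln r" .
    have "2 * ln C' / (- ln r) < real n" using N0 n by (simp add: N_def)
    then have "2 * ln C' / (- ln r) * (- ln r) < real n * (- ln r)"
      using lr by (intro mult_strict_right_mono) auto
    then have "2 * ln C' < real n * (- ln r)" using lr by simp
    then have "ln (w n) \<le> real n * (ln r / 2)" using l1 by (simp add: algebra_simps)
    then have "ln (w n) / real n \<le> ln r / 2" using npos by (simp add: divide_le_eq mult.commute)
    then show ?thesis using False by (simp add: log_rate_def)
  qed
  have "limsup (\<lambda>n. log_rate (w n) n) \<le> ereal (ln r / 2)"
    by (rule Limsup_bounded) (use ev in \<open>auto simp: eventually_sequentially\<close>)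
  also have "\<dots> < 0" using lr by simp
  finally show ?thesis .
qed


theorem theorem3p3:
  fixes A :: "real^'d^'d" and \<delta> \<omega> :: real
    and \<theta> :: "(real^'m) measure"
    and f :: "real^'d \<Rightarrow> (real^'d) measure \<Rightarrow> real^'m \<Rightarrow> real^'d"
  assumes theta: "prob_space \<theta>" "sets \<theta> = sets borel"
    and f_meas: "\<And>\<mu>. \<mu> \<in> P1 \<Longrightarrow>
       (\<lambda>(x, z). f x \<mu> z) \<in> borel_measurable (borel \<Otimes>\<^sub>M borel)"
    and D_meas: "Dlip f \<in> borel_measurable \<theta>"
    and A1: "(\<integral>\<^sup>+ z. Dlip f z \<partial>\<theta>) < \<infinity>"
    and A2: "(\<integral>\<^sup>+ z. ennreal (norm (f 0 (return borel 0) z)) \<partial>\<theta>) < \<infinity>"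
    and A3: "\<omega> > 0" "onorm (\<lambda>x. A *v x) \<le> exp (- \<omega>)"
    and delta: "\<delta> > 0" "\<delta> * (2 * enn2real (\<integral>\<^sup>+ z. Dlip f z \<partial>\<theta>)) < 1 - exp (- \<omega>)"
  shows "\<exists>!\<mu>inf. \<mu>inf \<in> P1 \<and> Psi A \<delta> f \<theta> \<mu>inf = \<mu>inf
         \<and> (\<forall>\<gamma>\<in>P1. limsup (\<lambda>n. log_rate (W1 ((Psi A \<delta> f \<theta> ^^ n) \<gamma>) \<mu>inf) n) < 0)"
proof -
  have contr: "onorm (\<lambda>x. A *v x) + 2 * \<delta> * enn2real (\<integral>\<^sup>+ z. Dlip f z \<partial>\<theta>) < 1"
    using A3(2) delta(2) by (simp add: mult.assoc mult.left_commute)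
  interpret M0: mfs0 A \<delta> \<theta> f
    by (rule mfs0.intro) (use theta f_meas D_meas A1 A2 delta(1) contr in auto)
  have P0: "return borel (0::real^'d) \<in> P1"
    by (auto simp: P1_def prob_space_return nn_integral_return)
  obtain \<mu>0 where \<mu>0: "\<mu>0 \<in> P1" "Psi A \<delta> f \<theta> \<mu>0 = \<mu>0"
    using M0.fp_exists[OF P0] by blast
  define r where "r = (M0.q + 1) / 2"
  have r: "0 < r" "r < 1" "M0.q \<le> r" using M0.q_nonneg M0.q_lt1 by (auto simp: r_def)
  have rate: "limsup (\<lambda>n. log_rate (W1 ((Psi A \<delta> f \<theta> ^^ n) \<gamma>) \<mu>0) n) < 0" if \<gamma>: "\<gamma> \<in> P1" for \<gamma>
  proof -
    obtain \<mu> C where \<mu>: "\<mu> \<in> P1" "Psi A \<delta> f \<theta> \<mu> = \<mu>" and C: "C \<ge> 0"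
      and b: "\<And>n. W1 ((Psi A \<delta> f \<theta> ^^ n) \<gamma>) \<mu> \<le> C * M0.q^n"
      using M0.fp_exists[OF \<gamma>] by blast
    have "\<mu> = \<mu>0" by (rule M0.fp_unique) (use \<mu> \<mu>0 in auto)
    show ?thesis
    proof (rule limsup_neg[OF _ _ r(1,2) C])
      show "0 \<le> W1 ((Psi A \<delta> f \<theta> ^^ n) \<gamma>) \<mu>0" for n by (simp add: W1_def)
      show "W1 ((Psi A \<delta> f \<theta> ^^ n) \<gamma>) \<mu>0 \<le> C * r^n" for n
      proof -
        have "C * M0.q^n \<le> C * r^n" using C r M0.q_nonneg by (intro mult_left_mono power_mono) auto
        then show ?thesis using b[of n] \<open>\<mu> = \<mu>0\<close> by simp
      qed
    qed
  qed
  show ?thesis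
  proof (rule ex1I[of _ \<mu>0])
    show "\<mu>0 \<in> P1 \<and> Psi A \<delta> f \<theta> \<mu>0 = \<mu>0 \<and> (\<forall>\<gamma>\<in>P1. limsup (\<lambda>n. log_rate (W1 ((Psi A \<delta> f \<theta> ^^ n) \<gamma>) \<mu>0) n) < 0)"
      using \<mu>0 rate by blast
    fix \<mu> assume "\<mu> \<in> P1 \<and> Psi A \<delta> f \<theta> \<mu> = \<mu> \<and> (\<forall>\<gamma>\<in>P1. limsup (\<lambda>n. log_rate (W1 ((Psi A \<delta> f \<theta> ^^ n) \<gamma>) \<mu>) n) < 0)"
    then show "\<mu> = \<mu>0" using M0.fp_unique \<mu>0 by blast
  qed
qed

end
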